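(* Let $f\in C^1(\mathbb{R}^n,\mathbb{R}^n)$ and let $x_0$ be a nondegenerate $T$-periodic limit cycle of $\dot x=f(x)$, $T>0$. Let $A_{n-1}$ be any real $n\times(n-1)$ matrix such that the $n\times n$ matrix $(\dot x_0(0),A_{n-1})$ is nonsingular, and define, for $v\in\mathbb{R}^{n-1}$ near $0$, $S(v)=\Omega(T,0,x_0(0)+A_{n-1}v)$. Then $\dot x_0(0)\notin S'(0)(\mathbb{R}^{n-1})$.
   Context: $\Omega(\cdot,t_0,\xi)$ denotes the solution of the autonomous system $\dot x=f(x)$ satisfying $\Omega(t_0,t_0,\xi)=\xi$. The linearized system along $x_0$ is $\dot y=f'(x_0(t))y$; if $Y(t)$ is its fundamental matrix with $Y(0)=I$, the eigenvalues of $Y(T)$ are its characteristic multipliers ($+1$ is always one of them, since $\dot x_0$ is a $T$-periodic solution). The $T$-periodic limit cycle $x_0$ is called nondegenerate if the characteristic multiplier $+1$ of $\dot y=f'(x_0(t))y$ has algebraic multiplicity $1$ (as a root of the characteristic polynomial of $Y(T)$). *)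

theory Defs
  imports "HOL-Analysis.Analysis" "HOL-Computational_Algebra.Polynomial"
begin

definition is_solution_on :: "('a::real_normed_vector \<Rightarrow> 'a) \<Rightarrow> (real \<Rightarrow> 'a) \<Rightarrow> real set \<Rightarrow> bool" where
  "is_solution_on f x I \<longleftrightarrow> is_interval I \<and>
     (\<forall>s\<in>I. (x has_vector_derivative f (x s)) (at s within I))"

text \<open>The solution operator Omega(t, t0, xi) of the autonomous system x' = f x:
  the value at time t of the solution through xi at time t0
  (uniquely determined when f is C^1).\<close>
definition Omega :: "('a::real_normed_vector \<Rightarrow> 'a) \<Rightarrow> real \<Rightarrow> real \<Rightarrow> 'a \<Rightarrow> 'a" where
  "Omega f t t0 \<xi> = (THE y. \<exists>x I. t0 \<in> I \<and> t \<in> I \<and> is_solution_on f x I \<and> x t0 = \<xi> \<and> x t = y)"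

definition charpoly :: "real^'n^'n \<Rightarrow> real poly" where
  "charpoly M = det (\<chi> i j. (if i = j then [:0, 1:] else 0) - [:M $ i $ j:])"

definition fundamental_matrix :: "(real^'n \<Rightarrow> real^'n^'n) \<Rightarrow> (real \<Rightarrow> real^'n) \<Rightarrow> (real \<Rightarrow> real^'n^'n) \<Rightarrow> bool" where
  "fundamental_matrix J x0 Y \<longleftrightarrow> Y 0 = mat 1 \<and>
     (\<forall>t. (Y has_vector_derivative (J (x0 t) ** Y t)) (at t))"

definition nondegenerate :: "(real^'n \<Rightarrow> real^'n^'n) \<Rightarrow> (real \<Rightarrow> real^'n) \<Rightarrow> real \<Rightarrow> bool" where
  "nondegenerate J x0 T \<longleftrightarrow>
     (\<exists>Y. fundamental_matrix J x0 Y \<and> order 1 (charpoly (Y T)) = 1)"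

text \<open>The n x n matrix (b, A) whose first column (index None) is b and remaining columns are those of A.\<close>
definition col_append :: "real^'m option \<Rightarrow> real^'m^'m option \<Rightarrow> real^'m option^'m option" where
  "col_append b A = (\<chi> i j. case j of None \<Rightarrow> b $ i | Some k \<Rightarrow> A $ i $ k)"

end

theory Submission
  imports Defs
begin

lemma decr_lemma:
  fixes g :: "real \<Rightarrow> real"
  assumes "a \<le> b"
    and "\<And>x. x \<in> {a..b} \<Longrightarrow> (g has_real_derivative g' x) (at x within {a..b})"
    and "\<And>x. x \<in> {a..b} \<Longrightarrow> g' x \<le> 0"
  shows "g b \<le> g a"
proof -
  have d: "\<And>x. \<lbrakk>a \<le> x; x \<le> b\<rbrakk> \<Longrightarrow> (g has_derivative (\<lambda>h. g' x * h)) (at x within {a..b})"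
    using assms(2) by (simp add: has_field_derivative_def)
  obtain x where x: "x \<in> {a..b}" "g b - g a = g' x * (b - a)"
    using mvt_very_simple[OF assms(1) d] by blast
  have "g' x * (b - a) \<le> 0" using assms(1) assms(3)[OF x(1)] by (simp add: mult_nonpos_nonneg)
  with x show ?thesis by simp
qed

lemma sqrt_sum_sq_le: "0 \<le> a \<Longrightarrow> 0 \<le> k \<Longrightarrow> sqrt (a^2 + k^2) \<le> a + k"
  by (rule real_le_lsqrt) (auto simp: power2_eq_square algebra_simps)

lemma gronwall:
  fixes w :: "real \<Rightarrow> 'a::real_inner"
  assumes L: "0 < L" and c: "0 \<le> c"
    and d: "\<And>t. t \<in> {0..T} \<Longrightarrow> (w has_vector_derivative w' t) (at t within {0..T})"
    and b: "\<And>t. t \<in> {0..T} \<Longrightarrow> norm (w' t) \<le> L * norm (w t) + c"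
    and t: "t \<in> {0..T}"
  shows "norm (w t) \<le> exp (L * t) * (norm (w 0) + c / L)"
proof -
  have main: "norm (w t) \<le> exp (L * t) * (norm (w 0) + c/L) + exp (L * t) * k" if k: "k > 0" for k
  proof -
    define \<rho> where "\<rho> s = sqrt (inner (w s) (w s) + k^2)" for s
    define \<phi> where "\<phi> s = exp (- (L * s)) * (\<rho> s + c/L)" for s
    have pos: "inner (w s) (w s) + k^2 > 0" for s using k by (simp add: add_nonneg_pos)
    have \<rho>pos: "\<rho> s > 0" for s unfolding \<rho>_def using pos by simp
    have nw: "norm (w s) \<le> \<rho> s" for s
      unfolding \<rho>_def norm_eq_sqrt_inner by (rule real_sqrt_le_mono) simp
    have sub: "{0..t} \<subseteq> {0..T}" using t by auto
    have d\<phi>: "(\<phi> has_real_derivative exp (- (L * s)) * (inner (w s) (w' s) / \<rho> s - L * \<rho> s - c))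
              (at s within {0..t})" if s: "s \<in> {0..t}" for s
    proof -
      have dw: "(w has_derivative (\<lambda>h. h *\<^sub>R w' s)) (at s within {0..t})"
        using d[of s] s sub has_vector_derivative_within_subset[OF _ sub]
        by (auto simp: has_vector_derivative_def)
      have "((\<lambda>s. inner (w s) (w s)) has_derivative
             (\<lambda>h. inner (w s) (h *\<^sub>R w' s) + inner (h *\<^sub>R w' s) (w s))) (at s within {0..t})"
        by (rule has_derivative_inner[OF dw dw])
      moreover have "(\<lambda>h. inner (w s) (h *\<^sub>R w' s) + inner (h *\<^sub>R w' s) (w s))
                     = (*) (2 * inner (w s) (w' s))"
        by (auto simp: inner_commute algebra_simps)
      ultimately have di0: "((\<lambda>s. inner (w s) (w s)) has_real_derivative 2 * inner (w s) (w' s))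
                          (at s within {0..t})"
        by (simp add: has_field_derivative_def)
      have di: "((\<lambda>s. inner (w s) (w s) + k^2) has_real_derivative 2 * inner (w s) (w' s))
                          (at s within {0..t})"
        using DERIV_add[OF di0 DERIV_const[of "k^2"]] by simp
      have dr: "(\<rho> has_real_derivative (inverse (\<rho> s) / 2) * (2 * inner (w s) (w' s))) (at s within {0..t})"
        unfolding \<rho>_def by (rule DERIV_chain2[OF DERIV_real_sqrt[OF pos] di])
      have "(\<phi> has_real_derivative (exp (- (L * s)) * (- L)) * (\<rho> s + c/L) + exp (- (L * s)) * ((inverse (\<rho> s) / 2) * (2 * inner (w s) (w' s)))) (at s within {0..t})"
        unfolding \<phi>_def
        by (rule derivative_eq_intros dr refl | simp)+
      moreover have "(exp (- (L * s)) * (- L)) * (\<rho> s + c/L) + exp (- (L * s)) * ((inverse (\<rho> s) / 2) * (2 * inner (w s) (w' s)))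
            = exp (- (L * s)) * (inner (w s) (w' s) / \<rho> s - L * \<rho> s - c)"
        using L by (simp add: field_simps)
      ultimately show ?thesis by simp
    qed
    have neg: "exp (- (L * s)) * (inner (w s) (w' s) / \<rho> s - L * \<rho> s - c) \<le> 0" if s: "s \<in> {0..t}" for s
    proof -
      have "inner (w s) (w' s) \<le> norm (w s) * norm (w' s)" by (rule norm_cauchy_schwarz)
      also have "\<dots> \<le> \<rho> s * norm (w' s)" by (rule mult_right_mono[OF nw]) simp
      finally have "inner (w s) (w' s) / \<rho> s \<le> norm (w' s)"
        using \<rho>pos[of s] by (simp add: divide_le_eq mult.commute)
      also have "\<dots> \<le> L * norm (w s) + c" using b[of s] s sub by auto
      also have "\<dots> \<le> L * \<rho> s + c" using nw[of s] L by simp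
      finally show ?thesis by (simp add: mult_nonneg_nonpos)
    qed
    have "\<phi> t \<le> \<phi> 0" using t by (intro decr_lemma[OF _ d\<phi> neg]) auto
    also have "\<phi> 0 = \<rho> 0 + c/L" by (simp add: \<phi>_def)
    also have "\<rho> 0 \<le> norm (w 0) + k"
      unfolding \<rho>_def using k sqrt_sum_sq_le[of "norm (w 0)" k]
      by (simp add: power2_norm_eq_inner[symmetric])
    finally have "exp (- (L * t)) * (\<rho> t + c/L) \<le> norm (w 0) + k + c/L" by (simp add: \<phi>_def)
    then have "\<rho> t + c/L \<le> exp (L * t) * (norm (w 0) + k + c/L)"
      by (simp add: exp_minus field_simps)
    moreover have "c / L \<ge> 0" using c L by simp
    ultimately show ?thesis using nw[of t] by (simp add: algebra_simps)
  qed
  show ?thesis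
  proof (rule field_le_epsilon)
    fix e :: real assume e: "0 < e"
    from main[of "e / exp (L * t)"] e show "norm (w t) \<le> exp (L * t) * (norm (w 0) + c / L) + e"
      by simp
  qed
qed

lemma exp_integral_bound:
  fixes L d \<tau> :: real
  assumes L: "0 < L" and d: "0 \<le> d" and \<tau>: "0 \<le> \<tau>"
  shows "((\<lambda>s. L * exp (2 * L * s) * d) has_integral (d/2 * exp (2 * L * \<tau>) - d/2)) {0..\<tau>}"
proof -
  have "((\<lambda>s. L * exp (2 * L * s) * d) has_integral (d/2 * exp (2 * L * \<tau>) - d/2 * exp (2 * L * 0))) {0..\<tau>}"
  proof (rule fundamental_theorem_of_calculus[OF \<tau>])
    fix x assume "x \<in> {0..\<tau>}"
    have "((\<lambda>s. d/2 * exp (2 * L * s)) has_real_derivative d/2 * (exp (2 * L * x) * (2 * L))) (at x within {0..\<tau>})"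
      by (rule derivative_eq_intros refl | simp)+
    then show "((\<lambda>s. d/2 * exp (2 * L * s)) has_vector_derivative L * exp (2 * L * x) * d) (at x within {0..\<tau>})"
      by (simp add: has_real_derivative_iff_has_vector_derivative[symmetric] algebra_simps)
  qed
  then show ?thesis by simp
qed

lemma picard:
  fixes G :: "real \<Rightarrow> 'a::banach \<Rightarrow> 'a"
  assumes T: "0 \<le> T" and L: "0 < L"
    and cont: "\<And>u. continuous_on {0..T} u \<Longrightarrow> continuous_on {0..T} (\<lambda>s. G s (u s))"
    and lip: "\<And>t x y. t \<in> {0..T} \<Longrightarrow> norm (G t x - G t y) \<le> L * norm (x - y)"
  shows "\<exists>z. continuous_on {0..T} z \<and> (\<forall>t\<in>{0..T}. z t = \<eta> + integral {0..t} (\<lambda>s. G s (z s)))"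
proof -
  define cl where "cl t = min T (max 0 t)" for t :: real
  have cl_in: "cl t \<in> {0..T}" for t using T by (auto simp: cl_def)
  have cl_id: "t \<in> {0..T} \<Longrightarrow> cl t = t" for t by (auto simp: cl_def)
  have cl_cont: "continuous_on UNIV cl" unfolding cl_def by (intro continuous_intros)
  define E where "E u s = exp (2 * L * s) *\<^sub>R u s" for u :: "real \<Rightarrow> 'a" and s
  define H where "H u t = exp (- (2 * L * t)) *\<^sub>R (\<eta> + integral {0..t} (\<lambda>s. G s (E u s)))"
    for u :: "real \<Rightarrow> 'a" and t
  have Gc: "continuous_on {0..T} (\<lambda>s. G s (E u s))" if "continuous_on {0..T} u" for u
    unfolding E_def by (rule cont) (intro continuous_intros that)
  have Hc: "continuous_on {0..T} (H u)" if "continuous_on {0..T} u" for u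
    unfolding H_def
    by (intro continuous_intros indefinite_integral_continuous_1 integrable_continuous_real Gc that)
  have inb: "(\<lambda>t. H (apply_bcontfun u) (cl t)) \<in> bcontfun" for u
  proof -
    have c: "continuous_on {0..T} (H (apply_bcontfun u))" by (rule Hc) simp
    have "continuous_on UNIV (\<lambda>t. H (apply_bcontfun u) (cl t))"
      by (rule continuous_on_compose2[OF c cl_cont]) (use cl_in in auto)
    moreover have "range (\<lambda>t. H (apply_bcontfun u) (cl t)) \<subseteq> H (apply_bcontfun u) ` {0..T}"
      using cl_in by auto
    moreover have "bounded (H (apply_bcontfun u) ` {0..T})"
      by (rule compact_imp_bounded, rule compact_continuous_image[OF c]) simp
    ultimately show ?thesis unfolding bcontfun_def by (auto intro: bounded_subset)
  qed
  define P where "P u = Bcontfun (\<lambda>t. H (apply_bcontfun u) (cl t))" for u :: "real \<Rightarrow>\<^sub>C 'a"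
  have Papp: "apply_bcontfun (P u) t = H (apply_bcontfun u) (cl t)" for u t
    unfolding P_def using inb[of u] by (simp add: Bcontfun_inverse)
  have Hdist: "dist (H (apply_bcontfun u) \<tau>) (H (apply_bcontfun v) \<tau>) \<le> 1/2 * dist u v"
    if \<tau>: "\<tau> \<in> {0..T}" for u v \<tau>
  proof -
    let ?d = "dist u v"
    have sub: "{0..\<tau>} \<subseteq> {0..T}" using \<tau> by auto
    have iu: "(\<lambda>s. G s (E (apply_bcontfun w) s)) integrable_on {0..\<tau>}" for w
      by (rule integrable_continuous_real, rule continuous_on_subset[OF Gc sub]) simp
    have "H (apply_bcontfun u) \<tau> - H (apply_bcontfun v) \<tau>
        = exp (- (2 * L * \<tau>)) *\<^sub>R integral {0..\<tau>} (\<lambda>s. G s (E (apply_bcontfun u) s) - G s (E (apply_bcontfun v) s))"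
      unfolding H_def by (simp add: integral_diff[OF iu iu] scaleR_diff_right scaleR_add_right)
    then have "dist (H (apply_bcontfun u) \<tau>) (H (apply_bcontfun v) \<tau>)
        = exp (- (2 * L * \<tau>)) * norm (integral {0..\<tau>} (\<lambda>s. G s (E (apply_bcontfun u) s) - G s (E (apply_bcontfun v) s)))"
      by (simp add: dist_norm)
    also have "norm (integral {0..\<tau>} (\<lambda>s. G s (E (apply_bcontfun u) s) - G s (E (apply_bcontfun v) s)))
        \<le> integral {0..\<tau>} (\<lambda>s. L * exp (2 * L * s) * ?d)"
    proof (rule integral_norm_bound_integral)
      show "(\<lambda>s. G s (E (apply_bcontfun u) s) - G s (E (apply_bcontfun v) s)) integrable_on {0..\<tau>}"
        by (intro integrable_diff iu)
      show "(\<lambda>s. L * exp (2 * L * s) * ?d) integrable_on {0..\<tau>}"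
        using exp_integral_bound[OF L zero_le_dist[of u v], of \<tau>] \<tau> by auto
      fix s assume s: "s \<in> {0..\<tau>}"
      have "norm (G s (E (apply_bcontfun u) s) - G s (E (apply_bcontfun v) s))
            \<le> L * norm (E (apply_bcontfun u) s - E (apply_bcontfun v) s)"
        using lip s sub by blast
      also have "norm (E (apply_bcontfun u) s - E (apply_bcontfun v) s) = exp (2 * L * s) * dist (u s) (v s)"
        unfolding E_def by (simp add: dist_norm scaleR_diff_right[symmetric])
      also have "L * (exp (2 * L * s) * dist (u s) (v s)) \<le> L * (exp (2 * L * s) * ?d)"
        using L by (intro mult_left_mono dist_bounded) auto
      finally show "norm (G s (E (apply_bcontfun u) s) - G s (E (apply_bcontfun v) s)) \<le> L * exp (2 * L * s) * ?d"
        by (simp add: mult.assoc)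
    qed
    also have "integral {0..\<tau>} (\<lambda>s. L * exp (2 * L * s) * ?d) = ?d/2 * exp (2 * L * \<tau>) - ?d/2"
      by (rule integral_unique[OF exp_integral_bound[OF L zero_le_dist]]) (use \<tau> in auto)
    finally have "dist (H (apply_bcontfun u) \<tau>) (H (apply_bcontfun v) \<tau>)
        \<le> exp (- (2 * L * \<tau>)) * (?d/2 * exp (2 * L * \<tau>) - ?d/2)"
      by (simp add: mult_left_mono)
    also have "\<dots> = ?d/2 - exp (- (2 * L * \<tau>)) * (?d/2)"
      by (simp add: algebra_simps exp_minus field_simps)
    also have "\<dots> \<le> ?d/2" by simp
    finally show ?thesis by simp
  qed
  have contr: "dist (P u) (P v) \<le> 1/2 * dist u v" for u v
    by (rule dist_bound) (simp only: Papp, rule Hdist[OF cl_in])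
  obtain u where u: "P u = u"
    using banach_fix_type[of "1/2" P] contr by auto
  define z where "z = E (apply_bcontfun u)"
  have "continuous_on {0..T} z" unfolding z_def E_def by (intro continuous_intros) simp
  moreover have "z t = \<eta> + integral {0..t} (\<lambda>s. G s (z s))" if t: "t \<in> {0..T}" for t
  proof -
    have "apply_bcontfun u t = H (apply_bcontfun u) t"
      using Papp[of u t] u cl_id[OF t] by simp
    then show ?thesis unfolding z_def E_def H_def
      by (simp add: exp_minus)
  qed
  ultimately show ?thesis by blast
qed

lemma onorm_mv_le:
  fixes A :: "real^'n^'m"
  shows "onorm ((*v) A) \<le> real CARD('m) * real CARD('n) * norm A"
proof (rule onorm_le_matrix_component)
  fix i j
  have "\<bar>A $ i $ j\<bar> \<le> norm (A $ i)" by (rule component_le_norm_cart)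
  also have "\<dots> \<le> norm A" by (rule Finite_Cartesian_Product.norm_nth_le)
  finally show "\<bar>A $ i $ j\<bar> \<le> norm A" .
qed

lemma norm_mv_le:
  fixes A :: "real^'n^'m"
  shows "norm (A *v x) \<le> onorm ((*v) A) * norm x"
  by (rule onorm) simp

locale odectx =
  fixes f :: "real^'n \<Rightarrow> real^'n" and J :: "real^'n \<Rightarrow> real^'n^'n"
  assumes fd: "\<And>x. (f has_derivative (\<lambda>h. J x *v h)) (at x)"
    and Jc: "continuous_on UNIV J"
begin

lemma f_cont: "continuous_on S f"
  by (rule continuous_at_imp_continuous_on) (use fd has_derivative_continuous in blast)

lemma lip_ball:
  assumes "bounded S"
  shows "\<exists>M>0. \<forall>a\<in>S. \<forall>b\<in>S. norm (f a - f b) \<le> M * norm (a - b)"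
proof -
  obtain R where "\<forall>x\<in>S. norm x \<le> R" using assms by (auto simp: bounded_iff)
  then have R: "S \<subseteq> cball 0 R" by auto
  have "bounded (J ` cball 0 R)"
    by (rule compact_imp_bounded, rule compact_continuous_image[OF continuous_on_subset[OF Jc]]) auto
  then obtain B where B0: "\<forall>y\<in>cball 0 R. norm (J y) \<le> B" by (auto simp: bounded_iff)
  have B: "\<And>y. y \<in> cball 0 R \<Longrightarrow> norm (J y) \<le> B" using B0 by blast
  define M where "M = max 1 (real CARD('n) * real CARD('n) * B)"
  have "M > 0" by (simp add: M_def)
  moreover have "norm (f a - f b) \<le> M * norm (a - b)" if "a \<in> S" "b \<in> S" for a b
  proof (rule differentiable_bound[where S = "cball 0 R"])
    show "convex (cball (0::real^'n) R)" by simp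
    show "(f has_derivative (\<lambda>h. J x *v h)) (at x within cball 0 R)" for x
      by (rule has_derivative_at_withinI[OF fd])
    fix x assume "x \<in> cball (0::real^'n) R"
    then have "onorm ((*v) (J x)) \<le> real CARD('n) * real CARD('n) * B"
    proof -
      have "onorm ((*v) (J x)) \<le> real CARD('n) * real CARD('n) * norm (J x)" by (rule onorm_mv_le)
      also have "\<dots> \<le> real CARD('n) * real CARD('n) * B"
        using B[of x] \<open>x \<in> cball 0 R\<close> by (intro mult_left_mono) auto
      finally show ?thesis .
    qed
    then show "onorm (\<lambda>h. J x *v h) \<le> M" unfolding M_def by simp
  qed (use that R in auto)
  ultimately show ?thesis by blast
qed

lemma omega_eq:
  assumes \<tau>: "0 \<le> \<tau>"
    and d: "\<And>s. s \<in> {0..\<tau>} \<Longrightarrow> (x has_vector_derivative f (x s)) (at s within {0..\<tau>})"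
  shows "Omega f \<tau> 0 (x 0) = x \<tau>"
  unfolding Omega_def
proof (rule the_equality)
  show "\<exists>xa I. 0 \<in> I \<and> \<tau> \<in> I \<and> is_solution_on f xa I \<and> xa 0 = x 0 \<and> xa \<tau> = x \<tau>"
    using \<tau> d by (intro exI[of _ x] exI[of _ "{0..\<tau>}"]) (auto simp: is_solution_on_def is_interval_cc)
next
  fix v assume "\<exists>y I. 0 \<in> I \<and> \<tau> \<in> I \<and> is_solution_on f y I \<and> y 0 = x 0 \<and> y \<tau> = v"
  then obtain y I where I: "0 \<in> I" "\<tau> \<in> I" and sol: "is_solution_on f y I" and y0: "y 0 = x 0"
    and yv: "y \<tau> = v" by blast
  have sub: "{0..\<tau>} \<subseteq> I"
  proof
    fix s assume "s \<in> {0..\<tau>}"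
    then show "s \<in> I" using sol I unfolding is_solution_on_def
      by (intro mem_is_interval_1_I[where S=I and a=0 and b=s and c=\<tau>]) auto
  qed
  have dy: "(y has_vector_derivative f (y s)) (at s within {0..\<tau>})" if "s \<in> {0..\<tau>}" for s
    by (rule has_vector_derivative_within_subset[OF _ sub])
       (use sol that sub in \<open>auto simp: is_solution_on_def\<close>)
  have cx: "continuous_on {0..\<tau>} x" by (rule continuous_on_vector_derivative[OF d])
  have cy: "continuous_on {0..\<tau>} y" by (rule continuous_on_vector_derivative[OF dy])
  have "compact (x ` {0..\<tau>})" "compact (y ` {0..\<tau>})"
    by (intro compact_continuous_image cx cy compact_Icc)+
  then have "bounded (x ` {0..\<tau>} \<union> y ` {0..\<tau>})"
    by (simp add: compact_imp_bounded)
  from lip_ball[OF this] obtain M where M: "M > 0" and lip: "\<forall>a\<in>x ` {0..\<tau>} \<union> y ` {0..\<tau>}.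
      \<forall>b\<in>x ` {0..\<tau>} \<union> y ` {0..\<tau>}. norm (f a - f b) \<le> M * norm (a - b)"
    by blast
  have "norm ((\<lambda>s. y s - x s) \<tau>) \<le> exp (M * \<tau>) * (norm ((\<lambda>s. y s - x s) 0) + 0 / M)"
  proof (rule gronwall[OF M order_refl])
    fix s assume s: "s \<in> {0..\<tau>}"
    show "((\<lambda>s. y s - x s) has_vector_derivative f (y s) - f (x s)) (at s within {0..\<tau>})"
      by (intro has_vector_derivative_diff dy d s)
    show "norm (f (y s) - f (x s)) \<le> M * norm (y s - x s) + 0"
      using lip s by simp
  qed (use \<tau> in auto)
  then show "v = x \<tau>" using yv y0 by simp
qed

end

locale cyc = odectx f J for f :: "real^'n \<Rightarrow> real^'n" and J +
  fixes x0 :: "real \<Rightarrow> real^'n" and T :: real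
  assumes T: "T > 0"
    and sol: "\<And>t. (x0 has_vector_derivative f (x0 t)) (at t)"
begin

lemma x0_cont: "continuous_on S x0"
  by (rule continuous_at_imp_continuous_on) (use sol has_vector_derivative_continuous in blast)

definition K where "K = (\<lambda>p. x0 (fst p) + snd p) ` ({0..T} \<times> cball (0::real^'n) 1)"

lemma K_compact: "compact K"
  unfolding K_def
  by (intro compact_continuous_image compact_Times compact_Icc compact_cball continuous_intros
        continuous_on_compose2[OF x0_cont]) auto

lemma in_K: "t \<in> {0..T} \<Longrightarrow> norm h \<le> 1 \<Longrightarrow> x0 t + h \<in> K"
  unfolding K_def by (rule image_eqI[of _ _ "(t, h)"]) auto

lemma ex_M: "\<exists>M>0. \<forall>y\<in>K. onorm ((*v) (J y)) \<le> M"
proof -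
  have "bounded (J ` K)"
    by (rule compact_imp_bounded, rule compact_continuous_image[OF continuous_on_subset[OF Jc]])
       (auto simp: K_compact)
  then obtain B where B0: "\<forall>y\<in>K. norm (J y) \<le> B" by (auto simp: bounded_iff)
  define M where "M = max 1 (real CARD('n) * real CARD('n) * B)"
  have "onorm ((*v) (J y)) \<le> M" if y: "y \<in> K" for y
  proof -
    have "onorm ((*v) (J y)) \<le> real CARD('n) * real CARD('n) * norm (J y)" by (rule onorm_mv_le)
    also have "\<dots> \<le> real CARD('n) * real CARD('n) * B"
      using B0 y by (intro mult_left_mono) auto
    finally show ?thesis unfolding M_def by simp
  qed
  moreover have "M > 0" by (simp add: M_def)
  ultimately show ?thesis by blast
qed

definition M where "M = (SOME M. M > 0 \<and> (\<forall>y\<in>K. onorm ((*v) (J y)) \<le> M))"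

lemma M_pos: "M > 0" and M_bound: "y \<in> K \<Longrightarrow> onorm ((*v) (J y)) \<le> M"
  using someI_ex[OF ex_M[unfolded Bex_def[symmetric]]] unfolding M_def by auto

lemma Jx0: "t \<in> {0..T} \<Longrightarrow> norm (J (x0 t) *v v) \<le> M * norm v"
proof -
  assume t: "t \<in> {0..T}"
  have "norm (J (x0 t) *v v) \<le> onorm ((*v) (J (x0 t))) * norm v" by (rule norm_mv_le)
  also have "\<dots> \<le> M * norm v"
    using M_bound[OF in_K[OF t, of 0]] by (intro mult_right_mono) auto
  finally show ?thesis .
qed

lemma lipK:
  assumes t: "t \<in> {0..T}" and a: "norm a \<le> 1" and b: "norm b \<le> 1"
  shows "norm (f (x0 t + a) - f (x0 t + b)) \<le> M * norm (a - b)"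
proof -
  have "norm (f (x0 t + a) - f (x0 t + b)) \<le> M * norm ((x0 t + a) - (x0 t + b))"
  proof (rule differentiable_bound[where S = "cball (x0 t) 1"])
    show "convex (cball (x0 t) 1)" by simp
    show "(f has_derivative (\<lambda>h. J x *v h)) (at x within cball (x0 t) 1)" for x
      by (rule has_derivative_at_withinI[OF fd])
    fix x assume "x \<in> cball (x0 t) 1"
    then have "norm (x - x0 t) \<le> 1" by (simp add: dist_norm norm_minus_commute)
    from in_K[OF t this] have "x \<in> K" by simp
    then show "onorm (\<lambda>h. J x *v h) \<le> M" using M_bound by simp
  qed (use a b in \<open>auto simp: dist_norm\<close>)
  then show ?thesis by simp
qed

lemma remainder:
  assumes e: "e > 0"
  shows "\<exists>\<delta>>0. \<delta> \<le> 1 \<and> (\<forall>t\<in>{0..T}. \<forall>h. norm h \<le> \<delta> \<longrightarrow>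
            norm (f (x0 t + h) - f (x0 t) - J (x0 t) *v h) \<le> e * norm h)"
proof -
  define N where "N = real CARD('n) * real CARD('n)"
  have N: "N > 0" by (simp add: N_def)
  have "uniformly_continuous_on K J"
    by (rule compact_uniformly_continuous[OF continuous_on_subset[OF Jc] K_compact]) simp
  moreover have "e / N > 0" using e N by simp
  ultimately obtain d where d: "d > 0" and dJ: "\<forall>x\<in>K. \<forall>x'\<in>K. dist x' x < d \<longrightarrow> dist (J x') (J x) < e / N"
    unfolding uniformly_continuous_on_def by blast
  define \<delta> where "\<delta> = min 1 (d/2)"
  have \<delta>: "\<delta> > 0" "\<delta> \<le> 1" "\<delta> < d" using d by (auto simp: \<delta>_def)
  have "norm (f (x0 t + h) - f (x0 t) - J (x0 t) *v h) \<le> e * norm h"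
    if t: "t \<in> {0..T}" and h: "norm h \<le> \<delta>" for t h
  proof -
    let ?g = "\<lambda>y. f y - J (x0 t) *v y"
    have "norm (?g (x0 t + h) - ?g (x0 t)) \<le> e * norm ((x0 t + h) - x0 t)"
    proof (rule differentiable_bound[where S = "cball (x0 t) \<delta>" and f' = "\<lambda>y k. J y *v k - J (x0 t) *v k"])
      show "convex (cball (x0 t) \<delta>)" by simp
      show "(?g has_derivative (\<lambda>k. J y *v k - J (x0 t) *v k)) (at y within cball (x0 t) \<delta>)" for y
        by (intro has_derivative_diff has_derivative_at_withinI[OF fd] bounded_linear.has_derivative
            [OF matrix_vector_mul_bounded_linear] has_derivative_ident)
      fix y assume y: "y \<in> cball (x0 t) \<delta>"
      then have ny: "norm (y - x0 t) \<le> 1" using \<delta> by (simp add: dist_norm norm_minus_commute)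
      have yK: "y \<in> K" using in_K[OF t ny] by simp
      have xK: "x0 t \<in> K" using in_K[OF t, of 0] by simp
      have "dist y (x0 t) < d" using y \<delta> by (simp add: dist_commute)
      then have "dist (J y) (J (x0 t)) < e / N" using dJ yK xK by blast
      then have nJ: "norm (J y - J (x0 t)) \<le> e / N" by (simp add: dist_norm)
      have "(\<lambda>k. J y *v k - J (x0 t) *v k) = (*v) (J y - J (x0 t))"
        by (auto simp: matrix_vector_mult_diff_rdistrib)
      moreover have "onorm ((*v) (J y - J (x0 t))) \<le> N * norm (J y - J (x0 t))"
        unfolding N_def by (rule onorm_mv_le)
      moreover have "N * norm (J y - J (x0 t)) \<le> N * (e / N)" using nJ N by (intro mult_left_mono) auto
      ultimately show "onorm (\<lambda>k. J y *v k - J (x0 t) *v k) \<le> e" using N by simp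
    qed (use h \<delta> in \<open>auto simp: dist_norm\<close>)
    then show ?thesis by (simp add: algebra_simps matrix_vector_right_distrib)
  qed
  with \<delta> show ?thesis by blast
qed

end

lemma bl_mv_left: "bounded_linear (\<lambda>A::real^'n^'m. A *v v)"
proof -
  have "linear (\<lambda>A::real^'n^'m. A *v v)"
    by (rule linearI) (simp_all add: matrix_vector_mult_add_rdistrib scaleR_matrix_vector_assoc)
  then show ?thesis by (simp add: linear_conv_bounded_linear)
qed

context cyc
begin

definition cl :: "real^'n \<Rightarrow> real^'n" where "cl = closest_point (cball 0 1)"

lemma cl_norm: "norm (cl v) \<le> 1"
  using closest_point_in_set[of "cball (0::real^'n) 1" v] unfolding cl_def by simp
lemma cl_lip: "norm (cl a - cl b) \<le> norm (a - b)"
  using closest_point_lipschitz[of "cball (0::real^'n) 1" a b] unfolding cl_def by (simp add: dist_norm)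
lemma cl_id: "norm v \<le> 1 \<Longrightarrow> cl v = v"
  unfolding cl_def by (rule closest_point_self) simp
lemma cl_cont: "continuous_on S cl"
  unfolding cl_def by (rule continuous_on_closest_point) auto

lemma construct:
  assumes small: "exp (M * T) * norm \<eta> < 1"
  shows "\<exists>z. z 0 = \<eta> \<and> (\<forall>s\<in>{0..T}. (z has_vector_derivative (f (x0 s + z s) - f (x0 s))) (at s within {0..T})
             \<and> norm (z s) \<le> exp (M * T) * norm \<eta>)"
proof -
  define G where "G s v = f (x0 s + cl v) - f (x0 s)" for s v
  have contG: "continuous_on {0..T} (\<lambda>s. G s (u s))" if u: "continuous_on {0..T} u" for u
  proof -
    have c1: "continuous_on {0..T} (\<lambda>s. x0 s + cl (u s))"
      by (intro continuous_on_add x0_cont continuous_on_compose2[OF cl_cont u]) auto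
    have c2: "continuous_on {0..T} (\<lambda>s. f (x0 s + cl (u s)))"
      by (rule continuous_on_compose2[OF f_cont c1]) auto
    have c3: "continuous_on {0..T} (\<lambda>s. f (x0 s))"
      by (rule continuous_on_compose2[OF f_cont x0_cont]) auto
    show ?thesis unfolding G_def by (intro continuous_on_diff c2 c3)
  qed
  have lipG: "norm (G t a - G t b) \<le> M * norm (a - b)" if t: "t \<in> {0..T}" for t a b
  proof -
    have "norm (G t a - G t b) = norm (f (x0 t + cl a) - f (x0 t + cl b))" by (simp add: G_def)
    also have "\<dots> \<le> M * norm (cl a - cl b)" by (rule lipK[OF t cl_norm cl_norm])
    also have "\<dots> \<le> M * norm (a - b)" using M_pos cl_lip by (intro mult_left_mono) auto
    finally show ?thesis .
  qed
  obtain z where zc: "continuous_on {0..T} z"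
    and zeq: "\<forall>t\<in>{0..T}. z t = \<eta> + integral {0..t} (\<lambda>s. G s (z s))"
    using picard[of T M G \<eta>, OF _ M_pos contG lipG] T by auto
  define zz where "zz t = \<eta> + integral {0..t} (\<lambda>s. G s (z s))" for t
  have zzz: "t \<in> {0..T} \<Longrightarrow> zz t = z t" for t using zeq by (simp add: zz_def)
  have dzz0: "(zz has_vector_derivative G s (z s)) (at s within {0..T})" if s: "s \<in> {0..T}" for s
    unfolding zz_def
    by (rule has_vector_derivative_add[OF has_vector_derivative_const
          integral_has_vector_derivative[OF contG[OF zc] s], simplified])
  have dzz: "(zz has_vector_derivative G s (zz s)) (at s within {0..T})" if s: "s \<in> {0..T}" for s
    using dzz0[OF s] zzz[OF s] by simp
  have zz0: "zz 0 = \<eta>" by (simp add: zz_def)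
  have G0: "G s 0 = 0" for s by (simp add: G_def cl_id)
  have bnd: "norm (zz s) \<le> exp (M * T) * norm \<eta>" if s: "s \<in> {0..T}" for s
  proof -
    have "norm (zz s) \<le> exp (M * s) * (norm (zz 0) + 0 / M)"
    proof (rule gronwall[OF M_pos order_refl dzz _ s])
      fix t assume t: "t \<in> {0..T}"
      show "norm (G t (zz t)) \<le> M * norm (zz t) + 0" using lipG[OF t, of "zz t" 0] G0 by simp
    qed
    also have "\<dots> \<le> exp (M * T) * norm \<eta>"
      using s M_pos zz0 by (simp add: mult_right_mono)
    finally show ?thesis .
  qed
  have "zz s = cl (zz s)" if s: "s \<in> {0..T}" for s
    using bnd[OF s] small by (intro cl_id[symmetric]) auto
  then have "(zz has_vector_derivative (f (x0 s + zz s) - f (x0 s))) (at s within {0..T})" if s: "s \<in> {0..T}" for s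
    using dzz[OF s] s unfolding G_def by metis
  with bnd zz0 show ?thesis by blast
qed

lemma omega_val:
  assumes z0: "z 0 = \<eta>"
    and dz: "\<And>s. s \<in> {0..T} \<Longrightarrow> (z has_vector_derivative (f (x0 s + z s) - f (x0 s))) (at s within {0..T})"
  shows "Omega f T 0 (x0 0 + \<eta>) = x0 T + z T"
proof -
  have "Omega f T 0 ((\<lambda>s. x0 s + z s) 0) = (\<lambda>s. x0 s + z s) T"
  proof (rule omega_eq)
    show "0 \<le> T" using T by simp
    fix s assume s: "s \<in> {0..T}"
    have "((\<lambda>s. x0 s + z s) has_vector_derivative f (x0 s) + (f (x0 s + z s) - f (x0 s))) (at s within {0..T})"
      by (intro has_vector_derivative_add has_vector_derivative_at_within[OF sol] dz s)
    then show "((\<lambda>s. x0 s + z s) has_vector_derivative f ((\<lambda>s. x0 s + z s) s)) (at s within {0..T})"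
      by simp
  qed
  then show ?thesis using z0 by simp
qed

lemma omega_x0: "Omega f T 0 (x0 0) = x0 T"
  by (rule omega_eq) (use T in \<open>auto intro: has_vector_derivative_at_within[OF sol]\<close>)

end

context cyc
begin

lemma Phi_deriv:
  assumes Y0: "Y 0 = mat 1" and dY: "\<And>t. (Y has_vector_derivative J (x0 t) ** Y t) (at t)"
  shows "((\<lambda>\<eta>. Omega f T 0 (x0 0 + \<eta>)) has_derivative (\<lambda>\<eta>. Y T *v \<eta>)) (at 0)"
  unfolding has_derivative_at_alt
proof (intro conjI allI impI)
  show "bounded_linear ((*v) (Y T))" by simp
  fix e :: real assume e: "e > 0"
  define E where "E = exp (M * T)"
  have E1: "E \<ge> 1" unfolding E_def using M_pos T by simp
  define e' where "e' = e * M / E^2"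
  have e': "e' > 0" unfolding e'_def using e M_pos E1 by simp
  obtain \<delta>1 where \<delta>1: "\<delta>1 > 0" "\<delta>1 \<le> 1"
    and rem: "\<forall>t\<in>{0..T}. \<forall>h. norm h \<le> \<delta>1 \<longrightarrow> norm (f (x0 t + h) - f (x0 t) - J (x0 t) *v h) \<le> e' * norm h"
    using remainder[OF e'] by blast
  show "\<exists>d>0. \<forall>y. norm (y - 0) < d \<longrightarrow>
      norm (Omega f T 0 (x0 0 + y) - Omega f T 0 (x0 0 + 0) - Y T *v (y - 0)) \<le> e * norm (y - 0)"
  proof (intro exI[of _ "\<delta>1 / E"] conjI allI impI)
    show "\<delta>1 / E > 0" using \<delta>1 E1 by simp
    fix \<eta> :: "real^'n" assume "norm (\<eta> - 0) < \<delta>1 / E"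
    then have E\<eta>: "E * norm \<eta> < \<delta>1" using E1 by (simp add: field_simps)
    then have small: "exp (M * T) * norm \<eta> < 1" using \<delta>1 unfolding E_def by simp
    obtain z where z0: "z 0 = \<eta>"
      and dz: "\<And>s. s \<in> {0..T} \<Longrightarrow> (z has_vector_derivative (f (x0 s + z s) - f (x0 s))) (at s within {0..T})"
      and zb: "\<And>s. s \<in> {0..T} \<Longrightarrow> norm (z s) \<le> E * norm \<eta>"
      using construct[OF small] unfolding E_def by blast
    define w where "w s = z s - Y s *v \<eta>" for s
    have dw: "(w has_vector_derivative ((f (x0 s + z s) - f (x0 s)) - J (x0 s) *v (Y s *v \<eta>))) (at s within {0..T})"
      if s: "s \<in> {0..T}" for s
    proof -
      have "((\<lambda>t. Y t *v \<eta>) has_vector_derivative (J (x0 s) ** Y s) *v \<eta>) (at s)"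
        by (rule bounded_linear.has_vector_derivative[OF bl_mv_left dY])
      then have "((\<lambda>t. Y t *v \<eta>) has_vector_derivative J (x0 s) *v (Y s *v \<eta>)) (at s within {0..T})"
        by (simp add: matrix_vector_mul_assoc has_vector_derivative_at_within)
      then show ?thesis unfolding w_def by (intro has_vector_derivative_diff dz s)
    qed
    have wb: "norm ((f (x0 s + z s) - f (x0 s)) - J (x0 s) *v (Y s *v \<eta>)) \<le> M * norm (w s) + e' * (E * norm \<eta>)"
      if s: "s \<in> {0..T}" for s
    proof -
      have "(f (x0 s + z s) - f (x0 s)) - J (x0 s) *v (Y s *v \<eta>)
          = (f (x0 s + z s) - f (x0 s) - J (x0 s) *v z s) + J (x0 s) *v w s"
        unfolding w_def by (simp add: matrix_vector_mult_diff_distrib)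
      also have "norm \<dots> \<le> norm (f (x0 s + z s) - f (x0 s) - J (x0 s) *v z s) + norm (J (x0 s) *v w s)"
        by (rule norm_triangle_ineq)
      also have "norm (f (x0 s + z s) - f (x0 s) - J (x0 s) *v z s) \<le> e' * norm (z s)"
        using rem s zb[OF s] E\<eta> by auto
      also have "e' * norm (z s) \<le> e' * (E * norm \<eta>)" using e' zb[OF s] by (intro mult_left_mono) auto
      also have "norm (J (x0 s) *v w s) \<le> M * norm (w s)" by (rule Jx0[OF s])
      finally show ?thesis by simp
    qed
    have w0: "w 0 = 0" unfolding w_def using z0 Y0 by simp
    have "norm (w T) \<le> exp (M * T) * (norm (w 0) + e' * (E * norm \<eta>) / M)"
      by (rule gronwall[OF M_pos _ dw wb]) (use e' E1 T in auto)
    also have "\<dots> = e * norm \<eta>"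
      using w0 M_pos E1 unfolding E_def[symmetric] e'_def by (simp add: field_simps power2_eq_square)
    finally have "norm (w T) \<le> e * norm \<eta>" .
    moreover have "Omega f T 0 (x0 0 + \<eta>) = x0 T + z T" by (rule omega_val[OF z0 dz])
    moreover have "Omega f T 0 (x0 0 + 0) = x0 T" using omega_x0 by simp
    ultimately show "norm (Omega f T 0 (x0 0 + \<eta>) - Omega f T 0 (x0 0 + 0) - Y T *v (\<eta> - 0)) \<le> e * norm (\<eta> - 0)"
      by (simp add: w_def)
  qed
qed

end

context cyc
begin

lemma Y_fix:
  assumes Y0: "Y 0 = mat 1" and dY: "\<And>t. (Y has_vector_derivative J (x0 t) ** Y t) (at t)"
    and per: "x0 T = x0 0"
  shows "Y T *v f (x0 0) = f (x0 0)"
proof -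
  define p where "p = f (x0 0)"
  define \<phi> where "\<phi> t = Y t *v p - f (x0 t)" for t
  have d\<phi>: "(\<phi> has_vector_derivative J (x0 t) *v \<phi> t) (at t within {0..T})" for t
  proof -
    have "((\<lambda>s. Y s *v p) has_vector_derivative (J (x0 t) ** Y t) *v p) (at t)"
      by (rule bounded_linear.has_vector_derivative[OF bl_mv_left dY])
    moreover have "((f \<circ> x0) has_derivative ((\<lambda>h. J (x0 t) *v h) \<circ> (\<lambda>h. h *\<^sub>R f (x0 t)))) (at t)"
      by (rule diff_chain_at[OF sol[of t, unfolded has_vector_derivative_def] fd])
    then have "((\<lambda>s. f (x0 s)) has_vector_derivative J (x0 t) *v f (x0 t)) (at t)"
      unfolding has_vector_derivative_def by (simp add: o_def matrix_vector_mult_scaleR)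
    ultimately have "(\<phi> has_vector_derivative (J (x0 t) ** Y t) *v p - J (x0 t) *v f (x0 t)) (at t)"
      unfolding \<phi>_def by (rule has_vector_derivative_diff)
    then show ?thesis unfolding \<phi>_def
      by (simp add: matrix_vector_mul_assoc[symmetric] matrix_vector_mult_diff_distrib
          has_vector_derivative_at_within)
  qed
  have "norm (\<phi> T) \<le> exp (M * T) * (norm (\<phi> 0) + 0 / M)"
    by (rule gronwall[OF M_pos order_refl d\<phi>]) (use Jx0 T in auto)
  moreover have "\<phi> 0 = 0" unfolding \<phi>_def p_def using Y0 by simp
  ultimately have "\<phi> T = 0" by simp
  then show ?thesis unfolding \<phi>_def p_def using per by simp
qed

lemma Y_inj:
  assumes Y0: "Y 0 = mat 1" and dY: "\<And>t. (Y has_vector_derivative J (x0 t) ** Y t) (at t)"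
    and q: "Y T *v q = 0"
  shows "q = 0"
proof -
  define \<phi> where "\<phi> s = Y (T - s) *v q" for s
  have d\<phi>: "(\<phi> has_vector_derivative (- (J (x0 (T - s)) *v \<phi> s))) (at s within {0..T})" for s
  proof -
    have d1: "((\<lambda>s. T - s) has_vector_derivative -1) (at s)"
      using has_vector_derivative_diff[OF has_vector_derivative_const has_vector_derivative_id, of T "at s"]
      by simp
    have d2: "((\<lambda>u. Y u *v q) has_vector_derivative (J (x0 (T - s)) ** Y (T - s)) *v q) (at (T - s))"
      by (rule bounded_linear.has_vector_derivative[OF bl_mv_left dY])
    have "(((\<lambda>u. Y u *v q) \<circ> (\<lambda>s. T - s)) has_vector_derivative (-1) *\<^sub>R ((J (x0 (T - s)) ** Y (T - s)) *v q)) (at s)"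
      by (rule vector_diff_chain_at[OF d1 d2])
    then show ?thesis unfolding \<phi>_def
      by (simp add: o_def matrix_vector_mul_assoc[symmetric] has_vector_derivative_at_within)
  qed
  have "norm (\<phi> T) \<le> exp (M * T) * (norm (\<phi> 0) + 0 / M)"
  proof (rule gronwall[OF M_pos order_refl d\<phi>])
    fix s :: real assume s: "s \<in> {0..T}"
    then have "T - s \<in> {0..T}" by auto
    then show "norm (- (J (x0 (T - s)) *v \<phi> s)) \<le> M * norm (\<phi> s) + 0"
      using Jx0 by simp
  qed (use T in auto)
  moreover have "\<phi> 0 = 0" unfolding \<phi>_def using q by simp
  ultimately have "\<phi> T = 0" by simp
  then show ?thesis unfolding \<phi>_def using Y0 by simp
qed

end

theorem lemma1:
  fixes f :: "real^('m::finite) option \<Rightarrow> real^'m option"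
    and J :: "real^'m option \<Rightarrow> real^'m option^'m option"
    and x0 :: "real \<Rightarrow> real^'m option"
    and T :: real
    and A :: "real^'m^'m option"
  assumes C1: "\<forall>x. (f has_derivative (\<lambda>h. J x *v h)) (at x)" "continuous_on UNIV J"
    and T_pos: "T > 0"
    and sol: "\<forall>t. (x0 has_vector_derivative f (x0 t)) (at t)"
    and periodic: "\<forall>t. x0 (t + T) = x0 t"
    and nonconst: "\<exists>t. x0 t \<noteq> x0 0"
    and nondeg: "nondegenerate J x0 T"
    and nonsing: "det (col_append (vector_derivative x0 (at 0)) A) \<noteq> 0"
  defines "S \<equiv> (\<lambda>v. Omega f T 0 (x0 0 + A *v v))"
  shows "S differentiable (at 0) \<and>
         vector_derivative x0 (at 0) \<notin> range (frechet_derivative S (at 0))"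
proof -
  interpret cyc f J x0 T
    by unfold_locales (use C1 T_pos sol in auto)
  obtain Y where Y0: "Y 0 = mat 1" and dY: "\<And>t. (Y has_vector_derivative J (x0 t) ** Y t) (at t)"
    using nondeg unfolding nondegenerate_def fundamental_matrix_def by blast
  have dA: "((*v) A has_derivative (*v) A) (at 0)"
    by (rule bounded_linear.has_derivative[OF matrix_vector_mul_bounded_linear has_derivative_ident])
  have dP: "((\<lambda>\<eta>. Omega f T 0 (x0 0 + \<eta>)) has_derivative (\<lambda>\<eta>. Y T *v \<eta>)) (at (A *v 0))"
    using Phi_deriv[OF Y0 dY] by simp
  have "(((\<lambda>\<eta>. Omega f T 0 (x0 0 + \<eta>)) \<circ> (*v) A) has_derivative ((\<lambda>\<eta>. Y T *v \<eta>) \<circ> (*v) A)) (at 0)"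
    by (rule diff_chain_at[OF dA dP])
  then have dS: "(S has_derivative (\<lambda>v. Y T *v (A *v v))) (at 0)"
    unfolding S_def by (simp add: o_def)
  have p: "vector_derivative x0 (at 0) = f (x0 0)"
    using sol by (simp add: vector_derivative_at)
  have Yfix: "Y T *v f (x0 0) = f (x0 0)"
    using Y_fix[OF Y0 dY] periodic[rule_format, of 0] by simp
  have notin: "f (x0 0) \<notin> range (\<lambda>v. Y T *v (A *v v))"
  proof
    assume "f (x0 0) \<in> range (\<lambda>v. Y T *v (A *v v))"
    then obtain v where v: "f (x0 0) = Y T *v (A *v v)" by blast
    have "Y T *v (A *v v - f (x0 0)) = 0"
      using v Yfix by (simp add: matrix_vector_mult_diff_distrib)
    then have "A *v v - f (x0 0) = 0" by (rule Y_inj[OF Y0 dY])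
    then have Av: "A *v v = f (x0 0)" by simp
    define x :: "real^'m option" where "x = (\<chi> i. case i of None \<Rightarrow> -1 | Some k \<Rightarrow> v $ k)"
    define Mx where "Mx = col_append (vector_derivative x0 (at 0)) A"
    have "Mx *v x = 0"
    proof -
      have "(Mx *v x) $ i = 0" for i
      proof -
        have "(Mx *v x) $ i = (\<Sum>j\<in>insert None (range Some). Mx $ i $ j * x $ j)"
          by (simp add: matrix_vector_mult_def UNIV_option_conv[symmetric])
        also have "\<dots> = Mx $ i $ None * x $ None + (\<Sum>j\<in>range Some. Mx $ i $ j * x $ j)"
          by (rule sum.insert) auto
        also have "(\<Sum>j\<in>range Some. Mx $ i $ j * x $ j) = (\<Sum>k\<in>UNIV. A $ i $ k * v $ k)"
          by (subst sum.reindex) (auto simp: Mx_def x_def col_append_def)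
        also have "\<dots> = (A *v v) $ i" by (simp add: matrix_vector_mult_def)
        finally show ?thesis using Av p by (simp add: Mx_def x_def col_append_def)
      qed
      then show ?thesis by (simp add: vec_eq_iff)
    qed
    moreover have "inj ((*v) Mx)"
      using nonsing unfolding Mx_def by (intro inj_matrix_vector_mult) (simp add: invertible_det_nz)
    ultimately have "x = 0" by (metis injD matrix_vector_mult_0_right)
    then have "x $ None = 0" by simp
    then show False unfolding x_def by simp
  qed
  show ?thesis
  proof
    show "S differentiable (at 0)" using dS by (rule differentiableI)
    show "vector_derivative x0 (at 0) \<notin> range (frechet_derivative S (at 0))"
      using notin frechet_derivative_at[OF dS, symmetric] p by simp
  qed
qed

end
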